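(* Let $X$ be a finite dimensional real Banach space and let $f: X \to X$ be piecewise affine and nonexpansive with respect to the norm of $X$. Suppose $v, w \in X$ satisfy $f(v + tw) = v + (t+1)w$ for all $t \ge 0$. Let $g(x) = f(x) - w$ for $x \in X$. Then for every $x \in X$ there exists $m \in \mathbb{N}$ such that $$f^{k+m}(x) = g^k(f^m(x)) + k w$$ for all $k \in \mathbb{N}$.
   Context: $f$ is piecewise affine if $X$ is a finite union of closed convex sets on each of which $f$ agrees with an affine map. $f$ is nonexpansive with respect to the norm if $\|f(x) - f(y)\| \le \|x - y\|$ for all $x,y$. *)

theory Defs
  imports "HOL-Analysis.Analysis"
begin

definition piecewise_affine :: "('a::real_normed_vector \<Rightarrow> 'a) \<Rightarrow> bool" where
  "piecewise_affine f \<longleftrightarrow>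
     (\<exists>\<C>. finite \<C> \<and> \<Union>\<C> = UNIV \<and>
        (\<forall>S\<in>\<C>. closed S \<and> convex S \<and>
           (\<exists>A b. linear A \<and> (\<forall>x\<in>S. f x = A x + b))))"

definition nonexpansive :: "('a::real_normed_vector \<Rightarrow> 'a) \<Rightarrow> bool" where
  "nonexpansive f \<longleftrightarrow> (\<forall>x y. norm (f x - f y) \<le> norm (x - y))"

end

theory Submission
  imports Defs
begin

lemma rec_escape:
  fixes S :: "'a::real_normed_vector set"
  assumes cl: "closed S" and cv: "convex S"
    and nr: "\<not>(\<forall>s\<in>S. \<forall>t\<ge>0. s + t *\<^sub>R w \<in> S)"
  shows "\<exists>T. \<forall>t\<ge>T. \<forall>p. norm p \<le> R \<longrightarrow> p + t *\<^sub>R w \<notin> S"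
proof (rule ccontr)
  assume H: "\<not> ?thesis"
  have "\<forall>s\<in>S. \<forall>t\<ge>0. s + t *\<^sub>R w \<in> S"
  proof (intro ballI allI impI)
    fix s and \<tau> :: real assume s: "s\<in>S" and \<tau>: "\<tau>\<ge>0"
    have "\<forall>e>0. \<exists>y\<in>S. dist y (s + \<tau> *\<^sub>R w) < e"
    proof (intro allI impI)
      fix e::real assume e: "e>0"
      define T where "T = max 1 (max \<tau> ((norm s + R) * \<tau> / e + 1))"
      obtain t p where t: "t \<ge> T" and p: "norm p \<le> R" and ps: "p + t *\<^sub>R w \<in> S"
        using H by blast
      have tpos: "t > 0" using t unfolding T_def by auto
      have tt: "\<tau> \<le> t" using t unfolding T_def by auto
      have tt2: "(norm s + R) * \<tau> / e + 1 \<le> t" using t unfolding T_def by auto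
      define l where "l = \<tau> / t"
      have l0: "0 \<le> l" using \<tau> tpos by (simp add: l_def)
      have l1: "l \<le> 1" using tt tpos by (simp add: l_def)
      have q: "(1-l) *\<^sub>R s + l *\<^sub>R (p + t *\<^sub>R w) \<in> S"
        using convexD[OF cv s ps, of "1-l" l] l0 l1 by simp
      have lt: "l * t = \<tau>" using tpos by (simp add: l_def)
      have eq: "(1-l) *\<^sub>R s + l *\<^sub>R (p + t *\<^sub>R w) = (s + \<tau> *\<^sub>R w) + l *\<^sub>R (p - s)"
        using lt by (simp add: algebra_simps flip: lt)
      have "dist ((1-l) *\<^sub>R s + l *\<^sub>R (p + t *\<^sub>R w)) (s + \<tau> *\<^sub>R w) = l * norm (p - s)"
        unfolding eq dist_norm using l0 by simp
      also have "\<dots> \<le> l * (R + norm s)"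
        using l0 p norm_triangle_ineq4[of p s] by (intro mult_left_mono) auto
      also have "\<dots> = \<tau> * (R + norm s) / t" by (simp add: l_def)
      also have "\<dots> < e"
      proof -
        have "(norm s + R) * \<tau> < e * t"
          using tt2 e by (simp add: field_simps)
        then show ?thesis using tpos by (simp add: field_simps)
      qed
      finally show "\<exists>y\<in>S. dist y (s + \<tau> *\<^sub>R w) < e" using q by blast
    qed
    then show "s + \<tau> *\<^sub>R w \<in> S" using closed_approachable[OF cl] by blast
  qed
  with nr show False by blast
qed

lemma ray_affine:
  fixes f :: "'a::real_normed_vector \<Rightarrow> 'a"
  assumes ne: "nonexpansive f"
    and ray: "\<forall>t::real. t \<ge> 0 \<longrightarrow> f (v + t *\<^sub>R w) = v + (t + 1) *\<^sub>R w"
    and rec: "\<forall>s\<in>S. \<forall>t\<ge>0. s + t *\<^sub>R w \<in> S"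
    and lin: "linear A" and fa: "\<forall>x\<in>S. f x = A x + b"
    and z: "z \<in> S" and s: "s \<ge> 0"
  shows "f (z + s *\<^sub>R w) = f z + s *\<^sub>R w"
proof -
  have fz: "\<And>t. t \<ge> 0 \<Longrightarrow> f (z + t *\<^sub>R w) = A z + b + t *\<^sub>R A w"
    using rec z fa by (simp add: linear_add[OF lin] linear_scale[OF lin])
  have Aw: "A w = w"
  proof (rule ccontr)
    assume "A w \<noteq> w"
    define d where "d = A w - w"
    define c where "c = A z + b - v - w"
    have dn: "norm d > 0" using \<open>A w \<noteq> w\<close> by (simp add: d_def)
    have bnd: "norm (c + t *\<^sub>R d) \<le> norm (z - v)" if "t \<ge> 0" for t
    proof -
      have "f (z + t *\<^sub>R w) - f (v + t *\<^sub>R w) = c + t *\<^sub>R d"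
        using fz[OF that] ray that by (simp add: c_def d_def algebra_simps)
      moreover have "norm (f (z + t *\<^sub>R w) - f (v + t *\<^sub>R w)) \<le> norm (z - v)"
        using ne unfolding nonexpansive_def by (metis add_diff_cancel_right)
      ultimately show ?thesis by simp
    qed
    define t where "t = (norm (z - v) + norm c + 1) / norm d"
    have t0: "t \<ge> 0" using dn by (simp add: t_def)
    have "norm (t *\<^sub>R d) = norm (z - v) + norm c + 1"
      using dn t0 by (simp add: t_def)
    moreover have "norm (t *\<^sub>R d) \<le> norm (c + t *\<^sub>R d) + norm c"
      by (metis add_diff_cancel_left' norm_triangle_ineq4 add.commute)
    ultimately show False using bnd[OF t0] by simp
  qed
  show ?thesis using fz[OF s] fz[of 0] Aw by simp
qed

lemma iter_v:
  fixes f :: "'a::real_normed_vector \<Rightarrow> 'a"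
  assumes ray: "\<forall>t::real. t \<ge> 0 \<longrightarrow> f (v + t *\<^sub>R w) = v + (t + 1) *\<^sub>R w"
  shows "(f ^^ n) v = v + real n *\<^sub>R w"
proof (induction n)
  case 0 then show ?case by simp
next
  case (Suc n)
  then show ?case using ray[rule_format, of "real n"] by (simp add: add.commute)
qed

lemma iter_ne:
  assumes ne: "nonexpansive f"
  shows "norm ((f ^^ n) x - (f ^^ n) y) \<le> norm (x - y)"
proof (induction n)
  case 0 then show ?case by simp
next
  case (Suc n)
  then show ?case using ne unfolding nonexpansive_def by (metis funpow.simps(2) o_apply order_trans)
qed

theorem mainTheorem9:
  fixes f :: "'a::banach \<Rightarrow> 'a" and v w :: 'a
  assumes "\<exists>B. finite B \<and> span B = (UNIV :: 'a set)"
    and "piecewise_affine f"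
    and "nonexpansive f"
    and "\<forall>t::real. t \<ge> 0 \<longrightarrow> f (v + t *\<^sub>R w) = v + (t + 1) *\<^sub>R w"
  shows "\<forall>x. \<exists>m::nat. \<forall>k::nat.
           (f ^^ (k + m)) x = ((\<lambda>y. f y - w) ^^ k) ((f ^^ m) x) + real k *\<^sub>R w"
proof
  fix x
  note ne = assms(3) and ray = assms(4)
  obtain C where Cf: "finite C" and CU: "\<Union>C = UNIV"
    and Cp: "\<forall>S\<in>C. closed S \<and> convex S \<and> (\<exists>A b. linear A \<and> (\<forall>x\<in>S. f x = A x + b))"
    using assms(2) unfolding piecewise_affine_def by blast
  define R where "R = norm (x - v) + norm v"
  define P where "P = (\<lambda>n. (f ^^ n) x - real n *\<^sub>R w)"
  have PR: "norm (P n) \<le> R" for n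
  proof -
    have "norm (P n - v) \<le> norm (x - v)"
      using iter_ne[OF ne, of n x v] iter_v[OF ray, of n]
      by (simp add: P_def algebra_simps)
    then show ?thesis unfolding R_def by (metis norm_triangle_sub order_trans add_mono_thms_linordered_semiring(3) diff_add_cancel norm_triangle_ineq)
  qed
  define NR where "NR = {S\<in>C. \<not>(\<forall>s\<in>S. \<forall>t\<ge>0. s + t *\<^sub>R w \<in> S)}"
  have "\<forall>S\<in>NR. \<exists>T. \<forall>t\<ge>T. \<forall>p. norm p \<le> R \<longrightarrow> p + t *\<^sub>R w \<notin> S"
    using rec_escape Cp unfolding NR_def by blast
  then obtain TT where TT: "\<And>S t p. S \<in> NR \<Longrightarrow> t \<ge> TT S \<Longrightarrow> norm p \<le> R \<Longrightarrow> p + t *\<^sub>R w \<notin> S"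
    by metis
  define T where "T = Max (insert 0 (TT ` NR))"
  have NRf: "finite NR" using Cf unfolding NR_def by simp
  have TTle: "TT S \<le> T" if "S \<in> NR" for S
    unfolding T_def using NRf that by (intro Max_ge) auto
  define m where "m = nat \<lceil>T\<rceil>"
  have mT: "T \<le> real m" unfolding m_def by linarith
  have good: "f (P n + real m *\<^sub>R w + s *\<^sub>R w) = f (P n + real m *\<^sub>R w) + s *\<^sub>R w"
    if "s \<ge> 0" for n s
  proof -
    obtain S where S: "S \<in> C" "P n + real m *\<^sub>R w \<in> S" using CU by blast
    have "S \<notin> NR"
      using TT[OF _ order_trans[OF TTle mT] PR] S by blast
    then have rec: "\<forall>s\<in>S. \<forall>t\<ge>0. s + t *\<^sub>R w \<in> S" using S unfolding NR_def by blast
    obtain A b where "linear A" "\<forall>x\<in>S. f x = A x + b" using Cp S by blast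
    from ray_affine[OF ne ray rec this S(2) that] show ?thesis .
  qed
  show "\<exists>m::nat. \<forall>k::nat.
           (f ^^ (k + m)) x = ((\<lambda>y. f y - w) ^^ k) ((f ^^ m) x) + real k *\<^sub>R w"
  proof (intro exI allI)
    fix k
    show "(f ^^ (k + m)) x = ((\<lambda>y. f y - w) ^^ k) ((f ^^ m) x) + real k *\<^sub>R w"
    proof (induction k)
      case 0 then show ?case by simp
    next
      case (Suc k)
      let ?y = "((\<lambda>y. f y - w) ^^ k) ((f ^^ m) x)"
      have yP: "?y = P (k + m) + real m *\<^sub>R w"
        using Suc by (simp add: P_def algebra_simps)
      have "(f ^^ (Suc k + m)) x = f (?y + real k *\<^sub>R w)" using Suc by simp
      also have "\<dots> = f ?y + real k *\<^sub>R w" using good[of "real k" "k+m"] yP by simp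
      finally show ?case by (simp add: algebra_simps)
    qed
  qed
qed

end
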